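(* Let $(\Lambda,d)$ be a finitely aligned $k$-graph. The family of sets $\{D_F,\ X_\Lambda\setminus D_F : F\in S_\Lambda\}$ is a subbasis for a Hausdorff topology on $X_\Lambda$.
   Context: A $k$-graph $(\Lambda,d)$ is a countable small category $\Lambda$ (objects identified with identity morphisms) with a functor $d:\Lambda\to\mathbb N^k$ satisfying unique factorization: whenever $d(\lambda)=m+n$ there are unique $\mu,\nu$ with $d(\mu)=m$, $d(\nu)=n$, $\lambda=\mu\nu$. $\Lambda^0=d^{-1}(0)$, $r,s$ range/source. $\Lambda^{\min}(\lambda,\mu)=\{(\alpha,\beta):\lambda\alpha=\mu\beta,\ d(\lambda\alpha)=d(\lambda)\vee d(\mu)\}$; finitely aligned means all are finite. $S_\Lambda$ is the set of finite $F\subseteq\{(\lambda,\mu)\in\Lambda\times\Lambda:s(\lambda)=s(\mu)\}$ such that distinct $(\lambda,\mu),(\nu,\omega)\in F$ satisfy $\Lambda^{\min}(\lambda,\nu)=\Lambda^{\min}(\mu,\omega)=\emptyset$. For $m\in(\mathbb N\cup\{\infty\})^k$, $\Omega_{k,m}$ is the $k$-graph with objects $\{p\in\mathbb N^k:p\le m\}$, morphisms $(p,q)$ with $p\le q\le m$, $r(p,q)=p$, $s(p,q)=q$, $d(p,q)=q-p$. $X_\Lambda$ is the set of all functors $x:\Omega_{k,m}\to\Lambda$ (any $m$) with $d(x(p,q))=q-p$; $d(x)=m$, $r(x)=x(0,0)$. For $F\in S_\Lambda$, $D_F=\{x\in X_\Lambda:\text{there is }(\lambda,\mu)\in F\text{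 with }d(\mu)\le d(x),\ x(0,d(\mu))=\mu\}$. *)

theory Defs
  imports "HOL-Analysis.Analysis" "HOL-Library.Extended_Nat"
begin

text \<open>The index set {1..k} of the coordinates of N^k is rendered as a
  finite type 'k, so degrees are functions 'k => nat (pointwise order, sum, sup).
  The small category is given by its set of morphisms (objects are identified
  with identity morphisms), range, source, composition (comp mu nu = mu nu,
  defined when src mu = rng nu) and degree functor.\<close>

record ('a, 'k) kgraph =
  Mor  :: "'a set"
  rng  :: "'a \<Rightarrow> 'a"
  src  :: "'a \<Rightarrow> 'a"
  comp :: "'a \<Rightarrow> 'a \<Rightarrow> 'a"
  deg  :: "'a \<Rightarrow> ('k \<Rightarrow> nat)"

definition Obj :: "('a, 'k) kgraph \<Rightarrow> 'a set" where
  "Obj L = {v \<in> Mor L. deg L v = (\<lambda>i. 0)}"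

definition is_kgraph :: "('a, 'k::finite) kgraph \<Rightarrow> bool" where
  "is_kgraph L \<longleftrightarrow>
     countable (Mor L)
   \<and> (\<forall>l\<in>Mor L. rng L l \<in> Obj L \<and> src L l \<in> Obj L)
   \<and> (\<forall>v\<in>Obj L. rng L v = v \<and> src L v = v)
   \<and> (\<forall>m\<in>Mor L. \<forall>n\<in>Mor L. src L m = rng L n \<longrightarrow>
        comp L m n \<in> Mor L \<and> rng L (comp L m n) = rng L m \<and> src L (comp L m n) = src L n
        \<and> deg L (comp L m n) = (\<lambda>i. deg L m i + deg L n i))
   \<and> (\<forall>l\<in>Mor L. comp L (rng L l) l = l \<and> comp L l (src L l) = l)
   \<and> (\<forall>a\<in>Mor L. \<forall>b\<in>Mor L. \<forall>c\<in>Mor L. src L a = rng L b \<longrightarrow> src L b = rng L c \<longrightarrow>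
        comp L (comp L a b) c = comp L a (comp L b c))
   \<and> (\<forall>l\<in>Mor L. \<forall>m n. deg L l = (\<lambda>i. m i + n i) \<longrightarrow>
        (\<exists>!(mu, nu). mu \<in> Mor L \<and> nu \<in> Mor L \<and> src L mu = rng L nu
                     \<and> deg L mu = m \<and> deg L nu = n \<and> comp L mu nu = l))"

definition Lmin :: "('a, 'k) kgraph \<Rightarrow> 'a \<Rightarrow> 'a \<Rightarrow> ('a \<times> 'a) set" where
  "Lmin L l m = {(a, b). a \<in> Mor L \<and> b \<in> Mor L \<and> src L l = rng L a \<and> src L m = rng L b
       \<and> comp L l a = comp L m b \<and> deg L (comp L l a) = (\<lambda>i. max (deg L l i) (deg L m i))}"

definition finitely_aligned :: "('a, 'k) kgraph \<Rightarrow> bool" where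
  "finitely_aligned L \<longleftrightarrow> (\<forall>l\<in>Mor L. \<forall>m\<in>Mor L. finite (Lmin L l m))"

definition S_set :: "('a, 'k) kgraph \<Rightarrow> ('a \<times> 'a) set set" where
  "S_set L = {F. finite F \<and> F \<subseteq> {(l, m). l \<in> Mor L \<and> m \<in> Mor L \<and> src L l = src L m}
     \<and> (\<forall>(l, m)\<in>F. \<forall>(n, w)\<in>F. (l, m) \<noteq> (n, w) \<longrightarrow> Lmin L l n = {} \<and> Lmin L m w = {})}"

text \<open>Paths. m :: 'k => enat is an element of (N \<union> {\<infinity>})^k; a path of degree m is
  represented by the pair (m, x) where x maps each morphism (p,q) of Omega_{k,m}
  ((\<forall>i. p i \<le> q i) \<le> m) to Lambda, and is undefined elsewhere (extensionality).\<close>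
definition le_ext :: "('k \<Rightarrow> nat) \<Rightarrow> ('k \<Rightarrow> enat) \<Rightarrow> bool" where
  "le_ext p m \<longleftrightarrow> (\<forall>i. enat (p i) \<le> m i)"

definition is_path :: "('a, 'k) kgraph \<Rightarrow> ('k \<Rightarrow> enat) \<Rightarrow>
    (('k \<Rightarrow> nat) \<times> ('k \<Rightarrow> nat) \<Rightarrow> 'a) \<Rightarrow> bool" where
  "is_path L m x \<longleftrightarrow>
     (\<forall>p q. \<not> ((\<forall>i. p i \<le> q i) \<and> le_ext q m) \<longrightarrow> x (p, q) = undefined)
   \<and> (\<forall>p q. (\<forall>i. p i \<le> q i) \<and> le_ext q m \<longrightarrow>
        x (p, q) \<in> Mor L \<and> deg L (x (p, q)) = (\<lambda>i. q i - p i)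
        \<and> rng L (x (p, q)) = x (p, p) \<and> src L (x (p, q)) = x (q, q))
   \<and> (\<forall>p q r. (\<forall>i. p i \<le> q i) \<and> (\<forall>i. q i \<le> r i) \<and> le_ext r m \<longrightarrow> x (p, r) = comp L (x (p, q)) (x (q, r)))"

definition X_set :: "('a, 'k) kgraph \<Rightarrow>
    (('k \<Rightarrow> enat) \<times> (('k \<Rightarrow> nat) \<times> ('k \<Rightarrow> nat) \<Rightarrow> 'a)) set" where
  "X_set L = {(m, x). is_path L m x}"

definition D_set :: "('a, 'k) kgraph \<Rightarrow> ('a \<times> 'a) set \<Rightarrow>
    (('k \<Rightarrow> enat) \<times> (('k \<Rightarrow> nat) \<times> ('k \<Rightarrow> nat) \<Rightarrow> 'a)) set" where
  "D_set L F = {(m, x) \<in> X_set L. \<exists>(l, mu)\<in>F. le_ext (deg L mu) m \<and> x ((\<lambda>i. 0), deg L mu) = mu}"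

end

theory Submission
  imports Defs
begin

lemma single_S: "mu \<in> Mor L \<Longrightarrow> {(mu, mu)} \<in> S_set L"
  by (simp add: S_set_def)

lemma D_single: "(m, x) \<in> D_set L {(mu, mu)} \<longleftrightarrow>
   (m, x) \<in> X_set L \<and> le_ext (deg L mu) m \<and> x ((\<lambda>i. 0), deg L mu) = mu"
  by (simp add: D_set_def)

lemma path_parts:
  assumes "is_path L m x"
  shows "\<forall>p q. \<not> ((\<forall>i. p i \<le> q i) \<and> le_ext q m) \<longrightarrow> x (p, q) = undefined"
    and "\<forall>p q. (\<forall>i. p i \<le> q i) \<and> le_ext q m \<longrightarrow>
        x (p, q) \<in> Mor L \<and> deg L (x (p, q)) = (\<lambda>i. q i - p i)
        \<and> rng L (x (p, q)) = x (p, p) \<and> src L (x (p, q)) = x (q, q)"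
    and "\<forall>p q r. (\<forall>i. p i \<le> q i) \<and> (\<forall>i. q i \<le> r i) \<and> le_ext r m \<longrightarrow> x (p, r) = comp L (x (p, q)) (x (q, r))"
proof -
  note h = assms[unfolded is_path_def]
  show "\<forall>p q. \<not> ((\<forall>i. p i \<le> q i) \<and> le_ext q m) \<longrightarrow> x (p, q) = undefined"
    using h by (rule conjunct1)
  show "\<forall>p q. (\<forall>i. p i \<le> q i) \<and> le_ext q m \<longrightarrow>
        x (p, q) \<in> Mor L \<and> deg L (x (p, q)) = (\<lambda>i. q i - p i)
        \<and> rng L (x (p, q)) = x (p, p) \<and> src L (x (p, q)) = x (q, q)"
    using h[THEN conjunct2] by (rule conjunct1)
  show "\<forall>p q r. (\<forall>i. p i \<le> q i) \<and> (\<forall>i. q i \<le> r i) \<and> le_ext r m \<longrightarrow> x (p, r) = comp L (x (p, q)) (x (q, r))"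
    using h[THEN conjunct2] by (rule conjunct2)
qed

lemma kg_fact:
  assumes "is_kgraph L"
  shows "\<forall>l\<in>Mor L. \<forall>m n. deg L l = (\<lambda>i. m i + n i) \<longrightarrow>
        (\<exists>!(mu, nu). mu \<in> Mor L \<and> nu \<in> Mor L \<and> src L mu = rng L nu
                     \<and> deg L mu = m \<and> deg L nu = n \<and> comp L mu nu = l)"
  using assms[unfolded is_kgraph_def] by (elim conjE)

lemma path_mor:
  assumes "is_path L m x" "\<forall>i. p i \<le> q i" "le_ext q m"
  shows "x (p, q) \<in> Mor L \<and> deg L (x (p, q)) = (\<lambda>i. q i - p i)
        \<and> rng L (x (p, q)) = x (p, p) \<and> src L (x (p, q)) = x (q, q)"
  using path_parts(2)[OF assms(1)] assms(2,3) by blast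

lemma path_comp:
  assumes "is_path L m x" "\<forall>i. p i \<le> q i" "\<forall>i. q i \<le> r i" "le_ext r m"
  shows "x (p, r) = comp L (x (p, q)) (x (q, r))"
  using path_parts(3)[OF assms(1)] assms(2,3,4) by blast

lemma path_undef:
  assumes "is_path L m x" "\<not> ((\<forall>i. p i \<le> q i) \<and> le_ext q m)"
  shows "x (p, q) = undefined"
  using path_parts(1)[OF assms(1)] assms(2) by blast

lemma path_deg0:
  assumes "is_path L m x" "le_ext q m"
  shows "x ((\<lambda>i. 0), q) \<in> Mor L \<and> deg L (x ((\<lambda>i. 0), q)) = q"
  using path_mor[OF assms(1) _ assms(2), of "\<lambda>i. 0"] by simp

lemma sep_deg:
  assumes a: "is_path L m x" and b: "is_path L m' x'" and lt: "m i < m' i"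
  shows "\<exists>mu\<in>Mor L. (m', x') \<in> D_set L {(mu, mu)} \<and> (m, x) \<notin> D_set L {(mu, mu)}"
proof -
  obtain n where n: "m i = enat n" using lt by (cases "m i") auto
  define p where "p = (\<lambda>j. if j = i then Suc n else 0)"
  have lp: "le_ext p m'" unfolding le_ext_def p_def
    using lt n by (auto simp: Suc_ile_eq simp flip: zero_enat_def)
  have nl: "\<not> le_ext p m" unfolding le_ext_def p_def using n
    by (metis Suc_n_not_le_n enat_ord_simps(1))
  define mu where "mu = x' ((\<lambda>i. 0), p)"
  have mu: "mu \<in> Mor L" "deg L mu = p" using path_deg0[OF b lp] mu_def by auto
  show ?thesis
  proof (rule bexI[OF _ mu(1)])
    have "x' ((\<lambda>i. 0), p) = mu" using mu_def by simp
    then show "(m', x') \<in> D_set L {(mu, mu)} \<and> (m, x) \<notin> D_set L {(mu, mu)}"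
      unfolding D_single using mu lp nl a b by (simp add: X_set_def)
  qed
qed

lemma sep_same:
  assumes K: "is_kgraph L" and a: "is_path L m x" and b: "is_path L m x'" and ne: "x \<noteq> x'"
  shows "\<exists>mu\<in>Mor L. (m, x) \<in> D_set L {(mu, mu)} \<and> (m, x') \<notin> D_set L {(mu, mu)}"
proof -
  obtain p q where pq: "x (p, q) \<noteq> x' (p, q)" using ne by (metis ext prod.collapse)
  have dom: "(\<forall>i. p i \<le> q i) \<and> le_ext q m"
    using pq path_undef[OF a] path_undef[OF b] by metis
  have d0: "x ((\<lambda>i. 0), q) \<noteq> x' ((\<lambda>i. 0), q)"
  proof
    assume eq: "x ((\<lambda>i. 0), q) = x' ((\<lambda>i. 0), q)"
    have lp: "le_ext p m" using dom unfolding le_ext_def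
      by (meson enat_ord_simps(1) order_trans)
    let ?z = "(\<lambda>i::'b. 0::nat)"
    have z: "\<forall>i. ?z i \<le> p i" by simp
    have c1: "x (?z, q) = comp L (x (?z, p)) (x (p, q))"
      using path_comp[OF a z] dom by blast
    have c2: "x' (?z, q) = comp L (x' (?z, p)) (x' (p, q))"
      using path_comp[OF b z] dom by blast
    have zq: "\<forall>i. ?z i \<le> q i" by simp
    have P: "x (?z, p) \<in> Mor L \<and> deg L (x (?z, p)) = (\<lambda>i. p i - 0) \<and> src L (x (?z, p)) = x (p, p)"
      using path_mor[OF a z lp] by blast
    have Q: "x (p, q) \<in> Mor L \<and> deg L (x (p, q)) = (\<lambda>i. q i - p i) \<and> rng L (x (p, q)) = x (p, p)"
      using path_mor[OF a] dom by blast
    have P': "x' (?z, p) \<in> Mor L \<and> deg L (x' (?z, p)) = (\<lambda>i. p i - 0) \<and> src L (x' (?z, p)) = x' (p, p)"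
      using path_mor[OF b z lp] by blast
    have Q': "x' (p, q) \<in> Mor L \<and> deg L (x' (p, q)) = (\<lambda>i. q i - p i) \<and> rng L (x' (p, q)) = x' (p, p)"
      using path_mor[OF b] dom by blast
    have lm: "x (?z, q) \<in> Mor L" and dq: "deg L (x (?z, q)) = (\<lambda>i. p i + (q i - p i))"
      using path_deg0[OF a] dom by auto
    let ?P = "\<lambda>(mu, nu). mu \<in> Mor L \<and> nu \<in> Mor L \<and> src L mu = rng L nu
                     \<and> deg L mu = p \<and> deg L nu = (\<lambda>i. q i - p i) \<and> comp L mu nu = x (?z, q)"
    have uf: "\<exists>!(mu, nu). mu \<in> Mor L \<and> nu \<in> Mor L \<and> src L mu = rng L nu
                     \<and> deg L mu = p \<and> deg L nu = (\<lambda>i. q i - p i) \<and> comp L mu nu = x (?z, q)"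
      by (rule kg_fact[OF K, rule_format, OF lm dq])
    have "?P (x (?z, p), x (p, q))" using P Q c1 by simp
    then have e1: "(THE t. ?P t) = (x (?z, p), x (p, q))" using uf by (rule the1_equality[rotated])
    have "?P (x' (?z, p), x' (p, q))" using P' Q' c2 eq by simp
    then have e2: "(THE t. ?P t) = (x' (?z, p), x' (p, q))" using uf by (rule the1_equality[rotated])
    have "(x (?z, p), x (p, q)) = (x' (?z, p), x' (p, q))"
      using e1 e2 by simp
    then show False using pq by simp
  qed
  define mu where "mu = x ((\<lambda>i. 0), q)"
  have mu: "mu \<in> Mor L" "deg L mu = q" using path_deg0[OF a] dom mu_def by auto
  show ?thesis
  proof (rule bexI[OF _ mu(1)])
    have "x ((\<lambda>i. 0), q) = mu" using mu_def by simp
    then show "(m, x) \<in> D_set L {(mu, mu)} \<and> (m, x') \<notin> D_set L {(mu, mu)}"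
      unfolding D_single using mu dom d0 a b by (simp add: X_set_def)
  qed
qed

lemma sep:
  assumes K: "is_kgraph L" and a: "u \<in> X_set L" and b: "v \<in> X_set L" and ne: "u \<noteq> v"
  shows "\<exists>mu\<in>Mor L. (u \<in> D_set L {(mu, mu)} \<and> v \<notin> D_set L {(mu, mu)})
                   \<or> (v \<in> D_set L {(mu, mu)} \<and> u \<notin> D_set L {(mu, mu)})"
proof -
  obtain m x m' x' where u: "u = (m, x)" and v: "v = (m', x')" by (cases u, cases v) auto
  have pa: "is_path L m x" "is_path L m' x'" using a b u v by (auto simp: X_set_def)
  show ?thesis
  proof (cases "m = m'")
    case True
    then show ?thesis using sep_same[OF K pa(1)] pa ne u v by blast
  next
    case False
    then obtain i where "m i \<noteq> m' i" by auto
    then have "m i < m' i \<or> m' i < m i" by auto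
    then show ?thesis
      using sep_deg[OF pa(1) pa(2)] sep_deg[OF pa(2) pa(1)] u v by blast
  qed
qed

theorem proposition5p4:
  fixes L :: "('a, 'k::finite) kgraph"
  assumes "is_kgraph L" and "finitely_aligned L"
  shows "topspace (topology_generated_by
            ({D_set L F | F. F \<in> S_set L} \<union> {X_set L - D_set L F | F. F \<in> S_set L}))
           = X_set L
       \<and> Hausdorff_space (topology_generated_by
            ({D_set L F | F. F \<in> S_set L} \<union> {X_set L - D_set L F | F. F \<in> S_set L}))"
proof -
  let ?S = "{D_set L F | F. F \<in> S_set L} \<union> {X_set L - D_set L F | F. F \<in> S_set L}"
  have e: "{} \<in> S_set L" by (simp add: S_set_def)
  have D0: "D_set L {} = {}" by (simp add: D_set_def)
  have sub: "\<Union>?S \<subseteq> X_set L" by (auto simp: D_set_def)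
  have "X_set L = X_set L - D_set L {}" using D0 by simp
  then have "X_set L \<in> ?S" using e by blast
  then have "\<Union>?S = X_set L" using sub by blast
  then have T: "topspace (topology_generated_by ?S) = X_set L" by simp
  have H: "Hausdorff_space (topology_generated_by ?S)"
    unfolding Hausdorff_space_def T
  proof (intro allI impI)
    fix u v assume uv: "u \<in> X_set L \<and> v \<in> X_set L \<and> u \<noteq> v"
    then obtain mu where mu: "mu \<in> Mor L" and
      c: "(u \<in> D_set L {(mu, mu)} \<and> v \<notin> D_set L {(mu, mu)})
                   \<or> (v \<in> D_set L {(mu, mu)} \<and> u \<notin> D_set L {(mu, mu)})"
      using sep[OF assms(1)] by blast
    let ?D = "D_set L {(mu, mu)}"
    have o1: "openin (topology_generated_by ?S) ?D"
      by (rule topology_generated_by_Basis) (use single_S[OF mu] in blast)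
    have o2: "openin (topology_generated_by ?S) (X_set L - ?D)"
      by (rule topology_generated_by_Basis) (use single_S[OF mu] in blast)
    show "\<exists>U V. openin (topology_generated_by ?S) U \<and> openin (topology_generated_by ?S) V
                \<and> u \<in> U \<and> v \<in> V \<and> disjnt U V"
      using c
    proof
      assume "u \<in> ?D \<and> v \<notin> ?D"
      then show ?thesis using o1 o2 uv by (intro exI[of _ ?D] exI[of _ "X_set L - ?D"]) (auto simp: disjnt_def)
    next
      assume "v \<in> ?D \<and> u \<notin> ?D"
      then show ?thesis using o1 o2 uv by (intro exI[of _ "X_set L - ?D"] exI[of _ ?D]) (auto simp: disjnt_def)
    qed
  qed
  show ?thesis using T H by simp
qed

end
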